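(* Let $q$ be a prime power and let $i,d,k,n,\bar{s}$ be positive integers with $\lfloor (d+1)/2\rfloor\leq i\leq d<k$, $k-i\geq 2$, $n-k-\bar{s}(k+d-2i)\geq d-i$, and $1\leq \bar{s}\leq q(q^{k-1}-1)/(q^{k-i}-1)$. Then: (i) $M_q(i;d,k,n)$ is an $\bar{s}^{\bar{e}_2}$-disjunct matrix, where $$\bar{e}_2=q^{(d-i)(k+\bar{s}(k+d-2i)-i)}\left[n-k-\bar{s}(k+d-2i)\atop d-i\right]_q\left(q^{k-i}\left[k-1\atop i-1\right]_q-(\bar{s}-1)q^{k-i-1}\left[k-2\atop i-1\right]_q\right)-1;$$ (ii) if moreover $i<d$, then, with $q,i,d,k,\bar{s}$ fixed and $n\to+\infty$, $\lim_{n\to+\infty}\frac{\bar{e}_2+1}{\bar{e}_1+1}=+\infty$, where $\bar{e}_1=q^{k-d}\left[k-1\atop d-1\right]_q-(\bar{s}-1)q^{k-d-1}\left[k-2\atop d-1\right]_q-1$.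
   Context: $\mathbb{F}_q$ is the finite field with $q$ elements. For integers $m_1,m_2$ the Gaussian coefficient is $\left[m_2\atop m_1\right]_q=\prod_{t=m_2-m_1+1}^{m_2}(q^t-1)\big/\prod_{t=1}^{m_1}(q^t-1)$, with $\left[m_2\atop 0\right]_q=1$ and $\left[m_2\atop m_1\right]_q=0$ whenever $m_1<0$ or $m_2<m_1$. For $1\leq d<k<n$ and $\max\{0,d+k-n\}\leq i\leq d$, $M_q(i;d,k,n)$ is the binary matrix whose rows are indexed by the $d$-dimensional subspaces of $\mathbb{F}_q^n$ and whose columns are indexed by the $k$-dimensional subspaces of $\mathbb{F}_q^n$, with entry $M_q(A,B)=1$ iff $\dim(A\cap B)=i$. Viewing each column as the set of row indices where it has a 1-entry, a binary matrix is $s^e$-disjunct if for every column $C$ and every $s$ other columns $C_1,\dots,C_s$, the column $C$ has at least $e+1$ 1-entries not in $C_1\cup\cdots\cup C_s$. *)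

theory Defs
  imports "HOL-Analysis.Analysis"
begin

definition gauss_coef :: "nat \<Rightarrow> int \<Rightarrow> int \<Rightarrow> real" where
  "gauss_coef q m2 m1 =
     (if m1 < 0 \<or> m2 < m1 then 0
      else if m1 = 0 then 1
      else (\<Prod>t\<in>{m2 - m1 + 1..m2}. real q ^ nat t - 1) / (\<Prod>t\<in>{1..m1}. real q ^ nat t - 1))"

definition subspaces_of_dim :: "nat \<Rightarrow> ('a::field ^ 'n) set set" where
  "subspaces_of_dim m = {A. vec.subspace A \<and> vec.dim A = m}"

text \<open>Entry of M_q(i;d,k,n) at row A (d-subspace), column B (k-subspace).\<close>
definition Mentry :: "nat \<Rightarrow> ('a::field ^ 'n) set \<Rightarrow> ('a ^ 'n) set \<Rightarrow> bool" where
  "Mentry i A B \<longleftrightarrow> vec.dim (A \<inter> B) = i"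

text \<open>M_q(i;d,k,n) is s^e-disjunct: for every column C and every s other columns
  C_1..C_s, column C has at least e+1 one-entries not in C_1 \<union> ... \<union> C_s.\<close>
definition M_disjunct :: "'a::field itself \<Rightarrow> 'n::finite itself \<Rightarrow> nat \<Rightarrow> nat \<Rightarrow> nat \<Rightarrow> nat \<Rightarrow> real \<Rightarrow> bool" where
  "M_disjunct _ _ i d k s e \<longleftrightarrow>
     (\<forall>C \<in> (subspaces_of_dim k :: ('a ^ 'n) set set).
       \<forall>Cs. Cs \<subseteq> subspaces_of_dim k \<and> C \<notin> Cs \<and> card Cs = s \<longrightarrow>
         real (card {A \<in> (subspaces_of_dim d :: ('a ^ 'n) set set).
                       Mentry i A C \<and> (\<forall>B\<in>Cs. \<not> Mentry i A B)}) \<ge> e + 1)"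

definition e2bar :: "nat \<Rightarrow> nat \<Rightarrow> nat \<Rightarrow> nat \<Rightarrow> nat \<Rightarrow> nat \<Rightarrow> real" where
  "e2bar q i d k n s =
     real q ^ ((d - i) * (k + s * (k + d - 2 * i) - i))
     * gauss_coef q (int n - int k - int s * (int k + int d - 2 * int i)) (int d - int i)
     * (real q ^ (k - i) * gauss_coef q (int k - 1) (int i - 1)
        - (real s - 1) * real q ^ (k - i - 1) * gauss_coef q (int k - 2) (int i - 1))
     - 1"

definition e1bar :: "nat \<Rightarrow> nat \<Rightarrow> nat \<Rightarrow> nat \<Rightarrow> real" where
  "e1bar q d k s =
     real q ^ (k - d) * gauss_coef q (int k - 1) (int d - 1)
     - (real s - 1) * real q ^ (k - d - 1) * gauss_coef q (int k - 2) (int d - 1) - 1"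

end

theory Submission
  imports Defs
begin


lemma card_span_indep:
  fixes B :: "('a::{finite,field} ^ 'n) set"
  assumes "vec.independent B"
  shows "card (vec.span B) = CARD('a) ^ card B"
proof -
  have fin: "finite B" using assms vec.finiteI_independent by blast
  show ?thesis using fin assms
  proof (induction B rule: finite_induct)
    case empty then show ?case by simp
  next
    case (insert v B)
    have indB: "vec.independent B" using insert.prems vec.independent_insert by (metis insert.hyps(2))
    have vn: "v \<notin> vec.span B" using insert.prems vec.independent_insert insert.hyps(2) by metis
    have eq: "vec.span (insert v B) = (\<lambda>(c, w). c *s v + w) ` (UNIV \<times> vec.span B)"
    proof (rule set_eqI, rule iffI)
      fix x assume "x \<in> vec.span (insert v B)"
      then obtain c where "x - c *s v \<in> vec.span B" unfolding vec.span_insert by blast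
      then show "x \<in> (\<lambda>(c, w). c *s v + w) ` (UNIV \<times> vec.span B)"
        by (intro image_eqI[of _ _ "(c, x - c *s v)"]) auto
    next
      fix x assume "x \<in> (\<lambda>(c, w). c *s v + w) ` (UNIV \<times> vec.span B)"
      then obtain c w where "x = c *s v + w" "w \<in> vec.span B" by auto
      then show "x \<in> vec.span (insert v B)" unfolding vec.span_insert by (intro CollectI exI[of _ c]) auto
    qed
    have inj: "inj_on (\<lambda>(c, w). c *s v + w) (UNIV \<times> vec.span B)"
    proof (rule inj_onI, clarify)
      fix c w c' w' assume w: "w \<in> vec.span B" "w' \<in> vec.span B" and e: "c *s v + w = c' *s v + w'"
      have "(c - c') *s v = w' - w" using e by (simp add: algebra_simps vector_sub_rdistrib)
      moreover have "w' - w \<in> vec.span B" using w vec.span_diff by blast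
      ultimately have cc: "c = c'"
        using vn vec.span_scale[of "(c - c') *s v" B "inverse (c - c')"] by (metis eq_iff_diff_eq_0 left_inverse vector_smult_lid vector_smult_assoc)
      then show "c = c' \<and> w = w'" using e by simp
    qed
    have "card (vec.span (insert v B)) = card (UNIV :: 'a set) * card (vec.span B)"
      unfolding eq card_image[OF inj] card_cartesian_product by simp
    then show ?case using insert indB by simp
  qed
qed

lemma card_subspace:
  fixes S :: "('a::{finite,field} ^ 'n) set"
  assumes "vec.subspace S"
  shows "card S = CARD('a) ^ vec.dim S"
proof -
  obtain B where B: "B \<subseteq> S" "vec.independent B" "S \<subseteq> vec.span B" "card B = vec.dim S"
    using vec.basis_exists by blast
  have "vec.span B = S" using B assms vec.span_subspace by blast
  then show ?thesis using card_span_indep[OF B(2)] B(4) by simp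
qed

lemma exists_intermediate:
  fixes X Y :: "('a::field ^ 'n::finite) set"
  assumes "vec.subspace X" "vec.subspace Y" "X \<subseteq> Y" "vec.dim X \<le> m" "m \<le> vec.dim Y"
  obtains Z where "vec.subspace Z" "X \<subseteq> Z" "Z \<subseteq> Y" "vec.dim Z = m"
proof -
  obtain B where B: "B \<subseteq> X" "vec.independent B" "X \<subseteq> vec.span B" "card B = vec.dim X"
    using vec.basis_exists by blast
  obtain BY where BY: "B \<subseteq> BY" "BY \<subseteq> Y" "vec.independent BY" "Y \<subseteq> vec.span BY"
    using vec.maximal_independent_subset_extend[of B Y] B assms by blast
  have finY: "finite BY" using BY vec.finiteI_independent by blast
  have cY: "card BY = vec.dim Y" using vec.basis_card_eq_dim BY by blast
  have "card (BY - B) \<ge> m - card B" using cY B(4) assms finY BY(1)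
    by (simp add: card_Diff_subset finite_subset)
  then obtain E where E: "E \<subseteq> BY - B" "card E = m - card B"
    by (meson obtain_subset_with_card_n)
  have finE: "finite E" using E finY by (meson finite_Diff finite_subset)
  have finB: "finite B" using B vec.finiteI_independent by blast
  let ?B' = "B \<union> E"
  have ind: "vec.independent ?B'" using vec.independent_mono[OF BY(3)] E BY(1) by blast
  have cB': "card ?B' = m" using E finE finB assms B(4) by (subst card_Un_disjoint) auto
  show ?thesis
  proof
    show "vec.subspace (vec.span ?B')" by simp
    show "X \<subseteq> vec.span ?B'" using B(3) vec.span_mono by blast
    show "vec.span ?B' \<subseteq> Y" using BY E assms(2) B(1) assms(3)
      by (metis Diff_subset Un_subset_iff order_trans vec.span_minimal)
    show "vec.dim (vec.span ?B') = m" using vec.dim_span_eq_card_independent[OF ind] cB' by simp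
  qed
qed

lemma dim_sum_int:
  fixes S T :: "('a::field ^ 'n::finite) set"
  assumes "vec.subspace S" "vec.subspace T"
  shows "vec.dim (vec.span (S \<union> T)) + vec.dim (S \<inter> T) = vec.dim S + vec.dim T"
proof -
  have s1: "vec.span S = S" using assms(1) by (simp add: vec.span_eq_iff)
  have s2: "vec.span T = T" using assms(2) by (simp add: vec.span_eq_iff)
  have "vec.span (S \<union> T) = {x + y |x y. x \<in> S \<and> y \<in> T}"
    unfolding vec.span_Un s1 s2 by simp
  then show ?thesis using vec.dim_sums_Int[OF assms] by simp
qed

fun gseq :: "('a::field ^ 'n) set \<Rightarrow> ('a ^ 'n) set \<Rightarrow> ('a ^ 'n) list \<Rightarrow> bool" where
  "gseq S U [] = True"
| "gseq S U (v # vs) = (gseq S U vs \<and> v \<in> S \<and> v \<notin> vec.span (U \<union> set vs))"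

lemma gseq_set: "gseq S U vs \<Longrightarrow> set vs \<subseteq> S"
  by (induction vs) auto

lemma gseq_dim:
  fixes U :: "('a::field ^ 'n::finite) set"
  assumes "gseq S U vs" "vec.subspace U"
  shows "vec.dim (vec.span (U \<union> set vs)) = vec.dim U + length vs"
  using assms(1)
proof (induction vs)
  case Nil then show ?case by simp
next
  case (Cons v vs)
  have "vec.dim (vec.span (U \<union> set (v # vs))) = vec.dim (insert v (U \<union> set vs))" by simp
  also have "\<dots> = vec.dim (U \<union> set vs) + 1" using Cons.prems by (simp add: vec.dim_insert)
  also have "\<dots> = vec.dim U + length (v # vs)" using Cons.IH Cons.prems vec.dim_span[of "U \<union> set vs"] by simp
  finally show ?case .
qed

lemma gseq_mono:
  fixes U :: "('a::field ^ 'n::finite) set"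
  assumes "gseq S U vs" "set vs \<subseteq> A" "I \<subseteq> U"
  shows "gseq A I vs"
  using assms
proof (induction vs)
  case Nil then show ?case by simp
next
  case (Cons v vs)
  have "vec.span (I \<union> set vs) \<subseteq> vec.span (U \<union> set vs)" using Cons.prems by (intro vec.span_mono) auto
  moreover have "gseq A I vs" using Cons.IH Cons.prems by simp
  ultimately show ?case using Cons.prems by auto
qed

lemma gseq_lift:
  fixes U :: "('a::field ^ 'n::finite) set"
  assumes "gseq A I vs" "A \<subseteq> V" "A \<inter> U = I" "vec.subspace A" "vec.subspace U" "I \<subseteq> A"
  shows "gseq V U vs"
  using assms
proof (induction vs)
  case Nil then show ?case by simp
next
  case (Cons v vs)
  have vA: "v \<in> A" and vn: "v \<notin> vec.span (I \<union> set vs)" and g: "gseq A I vs" using Cons.prems by auto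
  have svs: "set vs \<subseteq> A" using gseq_set[OF g] .
  have "v \<notin> vec.span (U \<union> set vs)"
  proof
    assume "v \<in> vec.span (U \<union> set vs)"
    then obtain x y where xy: "v = x + y" "x \<in> vec.span U" "y \<in> vec.span (set vs)" unfolding vec.span_Un by blast
    have xU: "x \<in> U" using xy(2) Cons.prems(5) by (metis vec.span_eq_iff)
    have yA: "y \<in> A" using xy(3) svs Cons.prems(4) vec.span_minimal by blast
    have "x = v - y" using xy by simp
    then have "x \<in> A" using vA yA Cons.prems(4) vec.subspace_diff by blast
    then have "x \<in> I" using xU Cons.prems(3) by blast
    then have "x \<in> vec.span (I \<union> set vs)" by (simp add: vec.span_base)
    moreover have "y \<in> vec.span (I \<union> set vs)" using xy(3) vec.span_mono[of "set vs" "I \<union> set vs"] by blast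
    ultimately have "v \<in> vec.span (I \<union> set vs)" using xy(1) vec.span_add by blast
    then show False using vn by blast
  qed
  then show ?case using Cons.IH[OF g Cons.prems(2-6)] vA Cons.prems(2) by auto
qed

lemma finite_subspaces_set: "finite (X :: ('a::finite ^ 'n::finite) set set)"
  by (rule finite_subset[of _ "Pow UNIV"]) auto

lemma card_gseq:
  fixes S U :: "('a::{finite,field} ^ 'n::finite) set"
  assumes "vec.subspace S" "vec.subspace U" "U \<subseteq> S"
  shows "card {vs. length vs = t \<and> gseq S U vs} = (\<Prod>j<t. CARD('a) ^ vec.dim S - CARD('a) ^ (vec.dim U + j))"
proof (induction t)
  case 0
  have "{vs. length vs = 0 \<and> gseq S U vs} = {[]}" by auto
  then show ?case by simp
next
  case (Suc t)
  let ?L = "{vs. length vs = t \<and> gseq S U vs}"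
  let ?W = "\<lambda>vs. S - vec.span (U \<union> set vs)"
  have eq: "{vs. length vs = Suc t \<and> gseq S U vs} = (\<lambda>(vs, v). v # vs) ` (SIGMA vs:?L. ?W vs)"
  proof (rule set_eqI, rule iffI)
    fix xs assume "xs \<in> {vs. length vs = Suc t \<and> gseq S U vs}"
    then obtain v vs where "xs = v # vs" "length vs = t" "gseq S U vs" "v \<in> S" "v \<notin> vec.span (U \<union> set vs)"
      by (cases xs) auto
    then show "xs \<in> (\<lambda>(vs, v). v # vs) ` (SIGMA vs:?L. ?W vs)" by (intro image_eqI[of _ _ "(vs, v)"]) auto
  next
    fix xs assume "xs \<in> (\<lambda>(vs, v). v # vs) ` (SIGMA vs:?L. ?W vs)"
    then obtain vs v where "xs = v # vs" "vs \<in> ?L" "v \<in> ?W vs" by auto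
    then show "xs \<in> {vs. length vs = Suc t \<and> gseq S U vs}" by simp
  qed
  have inj: "inj_on (\<lambda>(vs, v). v # vs) (SIGMA vs:?L. ?W vs)" by (auto simp: inj_on_def)
  have finL: "finite ?L"
    by (rule finite_subset[of _ "{xs. set xs \<subseteq> UNIV \<and> length xs = t}"]) (use finite_lists_length_eq[of "UNIV::('a^'n) set" t] in auto)
  have cW: "card (?W vs) = CARD('a) ^ vec.dim S - CARD('a) ^ (vec.dim U + t)" if "vs \<in> ?L" for vs
  proof -
    have "U \<union> set vs \<subseteq> S" using that gseq_set[of S U vs] assms(3) by blast
    then have sub: "vec.span (U \<union> set vs) \<subseteq> S" using vec.span_minimal assms(1) by blast
    have "card (?W vs) = card S - card (vec.span (U \<union> set vs))"
      by (rule card_Diff_subset[OF _ sub]) simp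
    also have "\<dots> = CARD('a) ^ vec.dim S - CARD('a) ^ (vec.dim U + t)"
      using card_subspace[OF assms(1)] card_subspace[OF vec.subspace_span, of "U \<union> set vs"] gseq_dim[of S U vs] that assms(2)
      by (simp only: mem_Collect_eq)
    finally show ?thesis .
  qed
  have "card {vs. length vs = Suc t \<and> gseq S U vs} = card (SIGMA vs:?L. ?W vs)"
    unfolding eq card_image[OF inj] ..
  also have "\<dots> = (\<Sum>vs\<in>?L. card (?W vs))"
    by (rule card_SigmaI[OF finL]) simp
  also have "\<dots> = card ?L * (CARD('a) ^ vec.dim S - CARD('a) ^ (vec.dim U + t))"
    using cW by (simp only: sum.cong[OF refl cW] sum_constant of_nat_id)
  finally show ?case unfolding Suc prod.lessThan_Suc by (simp only: mult.commute)
qed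




lemma count_tgt:
  fixes I U V :: "('a::{finite,field} ^ 'n::finite) set"
  assumes sI: "vec.subspace I" and sU: "vec.subspace U" and sV: "vec.subspace V"
    and IU: "I \<subseteq> U" and UV: "U \<subseteq> V"
  shows "card {vs. length vs = t \<and> gseq V U vs}
       = card {A. vec.subspace A \<and> vec.dim A = vec.dim I + t \<and> I \<subseteq> A \<and> A \<subseteq> V \<and> A \<inter> U = I}
         * (\<Prod>j<t. CARD('a) ^ (vec.dim I + t) - CARD('a) ^ (vec.dim I + j))"
proof -
  let ?Seq = "{vs. length vs = t \<and> gseq V U vs}"
  let ?T = "{A. vec.subspace A \<and> vec.dim A = vec.dim I + t \<and> I \<subseteq> A \<and> A \<subseteq> V \<and> A \<inter> U = I}"
  let ?f = "\<lambda>vs. vec.span (I \<union> set vs)"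
  let ?F = "\<lambda>A. {vs. length vs = t \<and> gseq A I vs}"
  have F1: "?f vs \<in> ?T" if "vs \<in> ?Seq" for vs
  proof -
    have g: "gseq V U vs" "length vs = t" using that by auto
    have sv: "set vs \<subseteq> V" using gseq_set[OF g(1)] .
    have gI: "gseq V I vs" using gseq_mono[OF g(1) sv IU] .
    have d1: "vec.dim (?f vs) = vec.dim I + t" using gseq_dim[OF gI sI] g(2) by simp
    have d2: "vec.dim (vec.span (U \<union> set vs)) = vec.dim U + t" using gseq_dim[OF g(1) sU] g(2) by simp
    have sub: "?f vs \<subseteq> V" using sv IU UV sV vec.span_minimal[of "I \<union> set vs" V] by blast
    have spu: "vec.span (?f vs \<union> U) = vec.span (U \<union> set vs)"
    unfolding vec.span_eq
    proof (intro conjI)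
      show "?f vs \<union> U \<subseteq> vec.span (U \<union> set vs)"
        using IU vec.span_mono[of "I \<union> set vs" "U \<union> set vs"] vec.span_superset[of "U \<union> set vs"] by blast
      show "U \<union> set vs \<subseteq> vec.span (?f vs \<union> U)"
        using vec.span_superset[of "I \<union> set vs"] vec.span_superset[of "?f vs \<union> U"] by blast
    qed
    have "vec.dim (vec.span (?f vs \<union> U)) + vec.dim (?f vs \<inter> U) = vec.dim (?f vs) + vec.dim U"
      by (rule dim_sum_int) (auto simp: sU)
    then have d3: "vec.dim (?f vs \<inter> U) = vec.dim I" using d1 d2 spu by simp
    have "I \<subseteq> ?f vs \<inter> U" using IU vec.span_superset by blast
    then have "I = ?f vs \<inter> U"
      using vec.subspace_dim_equal[of I "?f vs \<inter> U"] sI sU d3 vec.subspace_inter[of "?f vs" U] by simp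
    then show ?thesis using d1 sub vec.span_superset[of "I \<union> set vs"] by auto
  qed
  have F2: "{vs \<in> ?Seq. ?f vs = A} = ?F A" if "A \<in> ?T" for A
  proof (rule set_eqI, rule iffI)
    fix vs assume "vs \<in> {vs \<in> ?Seq. ?f vs = A}"
    then have g: "gseq V U vs" "length vs = t" "?f vs = A" by auto
    have "set vs \<subseteq> A" using g(3) vec.span_superset[of "I \<union> set vs"] by blast
    then show "vs \<in> ?F A" using gseq_mono[OF g(1) _ IU] g(2) by blast
  next
    fix vs assume "vs \<in> ?F A"
    then have g: "gseq A I vs" "length vs = t" by auto
    have A: "vec.subspace A" "vec.dim A = vec.dim I + t" "I \<subseteq> A" "A \<subseteq> V" "A \<inter> U = I" using that by auto
    have gV: "gseq V U vs" using gseq_lift[OF g(1) A(4) A(5) A(1) sU A(3)] .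
    have sA: "set vs \<subseteq> A" using gseq_set[OF g(1)] .
    have sub: "?f vs \<subseteq> A" using sA A(3) A(1) vec.span_minimal[of "I \<union> set vs" A] by blast
    have "vec.dim (?f vs) = vec.dim I + t" using gseq_dim[OF g(1) sI] g(2) by simp
    then have "?f vs = A" using vec.subspace_dim_equal[OF vec.subspace_span A(1) sub] A(2) by simp
    then show "vs \<in> {vs \<in> ?Seq. ?f vs = A}" using gV g(2) by simp
  qed
  have U: "?Seq = (\<Union>A\<in>?T. {vs \<in> ?Seq. ?f vs = A})" using F1 by blast
  have finT: "finite ?T" by (rule finite_subspaces_set)
  have finF: "finite {vs \<in> ?Seq. ?f vs = A}" for A
    by (rule finite_subset[of _ "{xs. set xs \<subseteq> UNIV \<and> length xs = t}"])
       (use finite_lists_length_eq[of "UNIV::('a^'n) set" t] in auto)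
  have "card ?Seq = (\<Sum>A\<in>?T. card {vs \<in> ?Seq. ?f vs = A})"
    by (subst U, rule card_UN_disjoint[OF finT]) (use finF in auto)
  also have "\<dots> = (\<Sum>A\<in>?T. \<Prod>j<t. CARD('a) ^ (vec.dim I + t) - CARD('a) ^ (vec.dim I + j))"
  proof (rule sum.cong[OF refl])
    fix A assume AT: "A \<in> ?T"
    then have A: "vec.subspace A" "vec.dim A = vec.dim I + t" "I \<subseteq> A" by auto
    show "card {vs \<in> ?Seq. ?f vs = A} = (\<Prod>j<t. CARD('a) ^ (vec.dim I + t) - CARD('a) ^ (vec.dim I + j))"
      unfolding F2[OF AT] card_gseq[OF A(1) sI A(3)] A(2) ..
  qed
  finally show ?thesis by simp
qed




definition Aq :: "nat \<Rightarrow> nat \<Rightarrow> nat \<Rightarrow> real" where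
  "Aq q M t = (\<Prod>j<t. real q ^ (M - j) - 1)"

lemma qpow_gt1: "q \<ge> 2 \<Longrightarrow> m \<ge> 1 \<Longrightarrow> real q ^ m - 1 > 0"
proof -
  assume a: "q \<ge> 2" "m \<ge> 1"
  then have "real q ^ m \<ge> real q ^ 1" by (intro power_increasing) auto
  then have "real q ^ m \<ge> real q" by (simp only: power_one_right)
  moreover have "real q \<ge> 2" using a by simp
  ultimately show ?thesis by linarith
qed

lemma Aq_pos: "q \<ge> 2 \<Longrightarrow> t \<le> M \<Longrightarrow> Aq q M t > 0"
  unfolding Aq_def
proof (rule prod_pos)
  fix j assume "q \<ge> 2" "t \<le> M" "j \<in> {..<t}"
  then have "M - j \<ge> 1" by auto
  then have "real q ^ (M - j) \<ge> real q ^ 1" using \<open>q \<ge> 2\<close> by (intro power_increasing) auto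
  then have "real q ^ (M - j) \<ge> real q" by (simp only: power_one_right)
  moreover have "real q \<ge> 2" using \<open>q \<ge> 2\<close> by simp
  ultimately show "real q ^ (M - j) - 1 > 0" by linarith
qed

lemma gauss_Aq:
  assumes "t \<le> M"
  shows "gauss_coef q (int M) (int t) = Aq q M t / Aq q t t"
proof (cases "t = 0")
  case True then show ?thesis by (simp add: gauss_coef_def Aq_def)
next
  case False
  have e1: "(\<Prod>x\<in>{int M - int t + 1..int M}. real q ^ nat x - 1) = Aq q M t"
    unfolding Aq_def
    by (rule prod.reindex_bij_witness[symmetric, of _ "\<lambda>b. nat (int M - b)" "\<lambda>a. int M - int a"])
       (use assms in \<open>auto simp: nat_diff_distrib'\<close>)
  have e2: "(\<Prod>x\<in>{1..int t}. real q ^ nat x - 1) = Aq q t t"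
    unfolding Aq_def
    by (rule prod.reindex_bij_witness[symmetric, of _ "\<lambda>b. nat (int t - b)" "\<lambda>a. int t - int a"])
       (auto simp: nat_diff_distrib')
  show ?thesis using False assms unfolding gauss_coef_def e1 e2 by simp
qed

lemma Aq_Suc_shift: "Aq q (Suc M) (Suc t) = (real q ^ Suc M - 1) * Aq q M t"
  unfolding Aq_def prod.lessThan_Suc_shift by simp

lemma Aq_Suc: "Aq q M (Suc t) = Aq q M t * (real q ^ (M - t) - 1)"
  unfolding Aq_def by simp

lemma gauss_pascal:
  assumes q: "q \<ge> 2" and "t < M"
  shows "gauss_coef q (int (Suc M)) (int (Suc t)) - gauss_coef q (int M) (int (Suc t))
       = real q ^ (M - t) * gauss_coef q (int M) (int t)"
proof -
  have B: "Aq q t t > 0" using Aq_pos[OF q] by simp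
  have B1: "real q ^ Suc t - 1 > 0" by (rule qpow_gt1[OF q]) simp
  have pw: "real q ^ Suc M = real q ^ (M - t) * real q ^ Suc t"
    using assms by (simp flip: power_add)
  have "gauss_coef q (int (Suc M)) (int (Suc t)) - gauss_coef q (int M) (int (Suc t))
      = ((real q ^ Suc M - 1) * Aq q M t - Aq q M t * (real q ^ (M - t) - 1)) / ((real q ^ Suc t - 1) * Aq q t t)"
  proof -
    have g1: "gauss_coef q (int (Suc M)) (int (Suc t)) = Aq q (Suc M) (Suc t) / Aq q (Suc t) (Suc t)"
      using assms by (intro gauss_Aq) simp
    have g2: "gauss_coef q (int M) (int (Suc t)) = Aq q M (Suc t) / Aq q (Suc t) (Suc t)"
      using assms by (intro gauss_Aq) simp
    show ?thesis unfolding g1 g2 Aq_Suc_shift[of q M t] Aq_Suc_shift[of q t t] Aq_Suc[of q M t] by (simp add: diff_divide_distrib)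
  qed
  also have "\<dots> = (real q ^ (M - t) * Aq q M t) * (real q ^ Suc t - 1) / ((real q ^ Suc t - 1) * Aq q t t)"
    unfolding pw by (simp add: algebra_simps)
  also have "\<dots> = real q ^ (M - t) * (Aq q M t / Aq q t t)"
    using B1 by simp
  also have "\<dots> = real q ^ (M - t) * gauss_coef q (int M) (int t)"
    using assms by (simp add: gauss_Aq)
  finally show ?thesis .
qed

lemma gauss_ratio:
  assumes q: "q \<ge> 2" and "l \<le> m"
  shows "gauss_coef q (int (Suc m)) (int l) * (real q ^ (Suc m - l) - 1)
       = gauss_coef q (int m) (int l) * (real q ^ Suc m - 1)"
proof -
  have "Aq q (Suc m) l * (real q ^ (Suc m - l) - 1) = Aq q (Suc m) (Suc l)" by (simp add: Aq_Suc)
  also have "\<dots> = (real q ^ Suc m - 1) * Aq q m l" by (rule Aq_Suc_shift)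
  finally have e: "Aq q (Suc m) l * (real q ^ (Suc m - l) - 1) = (real q ^ Suc m - 1) * Aq q m l" .
  have B: "Aq q l l > 0" using Aq_pos[OF q] by simp
  have g1: "gauss_coef q (int (Suc m)) (int l) = Aq q (Suc m) l / Aq q l l"
    using assms by (intro gauss_Aq) simp
  have g2: "gauss_coef q (int m) (int l) = Aq q m l / Aq q l l"
    using assms by (intro gauss_Aq) simp
  show ?thesis unfolding g1 g2 using e B by (simp add: field_simps)
qed

definition Pq :: "nat \<Rightarrow> nat \<Rightarrow> nat \<Rightarrow> nat \<Rightarrow> real" where
  "Pq q a b t = (\<Prod>j<t. real q ^ a - real q ^ (b + j))"

lemma Pq_shift: "b \<le> a \<Longrightarrow> Pq q a b t = real q ^ (b * t) * Pq q (a - b) 0 t"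
proof -
  assume "b \<le> a"
  have "Pq q a b t = (\<Prod>j<t. real q ^ b * (real q ^ (a - b) - real q ^ j))"
    unfolding Pq_def
  proof (rule prod.cong[OF refl])
    fix j
    have "real q ^ a = real q ^ b * real q ^ (a - b)" using \<open>b \<le> a\<close> by (simp flip: power_add)
    then show "real q ^ a - real q ^ (b + j) = real q ^ b * (real q ^ (a - b) - real q ^ j)"
      by (simp add: power_add algebra_simps)
  qed
  also have "\<dots> = real q ^ (b * t) * Pq q (a - b) 0 t"
    unfolding Pq_def prod.distrib by (simp add: power_mult mult.commute)
  finally show ?thesis .
qed

lemma Pq_Aq: "t \<le> M \<Longrightarrow> Pq q M 0 t = (\<Prod>j<t. real q ^ j) * Aq q M t"
proof -
  assume "t \<le> M"
  have "Pq q M 0 t = (\<Prod>j<t. real q ^ j * (real q ^ (M - j) - 1))"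
    unfolding Pq_def
  proof (rule prod.cong[OF refl])
    fix j assume "j \<in> {..<t}"
    then have "real q ^ M = real q ^ j * real q ^ (M - j)" using \<open>t \<le> M\<close> by (simp flip: power_add)
    then show "real q ^ M - real q ^ (0 + j) = real q ^ j * (real q ^ (M - j) - 1)"
      by (simp add: algebra_simps)
  qed
  then show ?thesis unfolding Aq_def prod.distrib .
qed

lemma gauss_Pq:
  assumes q: "q \<ge> 2" and "t \<le> M"
  shows "gauss_coef q (int M) (int t) = Pq q M 0 t / Pq q t 0 t"
proof -
  have "(\<Prod>j<t. real q ^ j) > 0" using q by (intro prod_pos) auto
  then show ?thesis using assms by (simp add: Pq_Aq gauss_Aq)
qed

lemma gauss_lower:
  assumes q: "q \<ge> 2" and "1 \<le> t" "t \<le> M"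
  shows "gauss_coef q (int M) (int t) \<ge> (real q ^ M - 1) / (real q ^ t - 1)"
proof -
  obtain t' where t': "t = Suc t'" using assms by (cases t) auto
  obtain M' where M': "M = Suc M'" using assms by (cases M) auto
  note tt = t' M'
  have le: "t' \<le> M'" using assms tt by simp
  have pos: "Aq q t' t' > 0" using Aq_pos[OF q] by simp
  have mono: "Aq q t' t' \<le> Aq q M' t'"
    unfolding Aq_def
  proof (rule prod_mono, clarify)
    fix j assume "j < t'"
    have "real q ^ (t' - j) \<le> real q ^ (M' - j)" using q le by (intro power_increasing) auto
    moreover have "real q ^ (t' - j) \<ge> 1" using q by simp
    ultimately show "0 \<le> real q ^ (t' - j) - 1 \<and> real q ^ (t' - j) - 1 \<le> real q ^ (M' - j) - 1" by simp
  qed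
  have t1: "real q ^ t - 1 > 0" using qpow_gt1[OF q \<open>1 \<le> t\<close>] .
  have M1: "real q ^ M - 1 \<ge> 0" using q by simp
  have "gauss_coef q (int M) (int t) = (real q ^ M - 1) * Aq q M' t' / ((real q ^ t - 1) * Aq q t' t')"
  proof -
    have "gauss_coef q (int M) (int t) = Aq q M t / Aq q t t" using assms by (intro gauss_Aq)
    also have "\<dots> = (real q ^ M - 1) * Aq q M' t' / ((real q ^ t - 1) * Aq q t' t')"
      unfolding tt Aq_Suc_shift by simp
    finally show ?thesis .
  qed
  also have "\<dots> = ((real q ^ M - 1) / (real q ^ t - 1)) * (Aq q M' t' / Aq q t' t')" by simp
  also have "\<dots> \<ge> ((real q ^ M - 1) / (real q ^ t - 1)) * 1"
    using mono pos t1 M1 by (intro mult_left_mono) auto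
  finally show ?thesis by simp
qed




lemma span_of_subspace: "vec.subspace S \<Longrightarrow> vec.span S = S"
  by (simp add: vec.span_eq_iff)

lemma key_avoid:
  fixes A B C I U Z :: "('a::field ^ 'n::finite) set"
  assumes sA: "vec.subspace A" and sB: "vec.subspace B" and sC: "vec.subspace C"
    and sI: "vec.subspace I" and sU: "vec.subspace U" and sZ: "vec.subspace Z"
    and dC: "vec.dim C = k" and dI: "vec.dim I = i" and dA: "vec.dim A = d" and dB: "vec.dim B = k"
    and IC: "I \<subseteq> C" and IA: "I \<subseteq> A" and AU: "A \<inter> U = I" and CU: "C \<subseteq> U"
    and ZU: "Z \<subseteq> U" and CZ: "C \<subseteq> Z" and ZCB: "Z \<subseteq> vec.span (C \<union> B)"
    and dZ: "vec.dim Z = min (vec.dim (vec.span (C \<union> B))) (2 * k + d - 2 * i)"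
    and IB: "\<not> I \<subseteq> B" and id: "i \<le> d" and dk: "d < k"
  shows "vec.dim (A \<inter> B) \<noteq> i"
proof
  assume dT: "vec.dim (A \<inter> B) = i"
  define T where "T = A \<inter> B"
  have sT: "vec.subspace T" unfolding T_def using sA sB vec.subspace_inter by blast
  have sIB: "vec.subspace (I \<inter> B)" using sI sB vec.subspace_inter by blast
  define r where "r = vec.dim (I \<inter> B)"
  have ra: "r < i"
  proof (rule ccontr)
    assume "\<not> r < i"
    then have "I \<inter> B = I" using vec.subspace_dim_equal[OF sIB sI] dI r_def by auto
    then show False using IB by blast
  qed
  have TI: "T \<inter> I = I \<inter> B" unfolding T_def using IA by blast
  have b1: "vec.dim (vec.span (T \<union> I)) + vec.dim (T \<inter> I) = i + i"
    using dim_sum_int[OF sT sI] dT dI T_def by simp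
  have "vec.span (T \<union> I) \<subseteq> A" using IA sA T_def vec.span_minimal[of "T \<union> I" A] by blast
  then have b2: "vec.dim (vec.span (T \<union> I)) \<le> d" using vec.dim_subset dA by (metis vec.dim_span)
  have AC: "A \<inter> C = I" using AU CU IA IC by blast
  have TC: "T \<inter> C = I \<inter> B" unfolding T_def using AC by blast
  have c1: "vec.dim (vec.span (T \<union> C)) + r = i + k"
    using dim_sum_int[OF sT sC] dT dC T_def TC r_def by simp
  have d1: "vec.span (T \<union> C) \<inter> Z = C"
  proof
    show "C \<subseteq> vec.span (T \<union> C) \<inter> Z" using CZ vec.span_superset by blast
    show "vec.span (T \<union> C) \<inter> Z \<subseteq> C"
    proof
      fix x assume x: "x \<in> vec.span (T \<union> C) \<inter> Z"
      then obtain y c where yc: "x = y + c" "y \<in> vec.span T" "c \<in> vec.span C" unfolding vec.span_Un by blast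
      have yT: "y \<in> T" using yc(2) span_of_subspace[OF sT] by simp
      have cC: "c \<in> C" using yc(3) span_of_subspace[OF sC] by simp
      have "y = x - c" using yc by simp
      moreover have "x \<in> U" using x ZU by blast
      moreover have "c \<in> U" using cC CU by blast
      ultimately have "y \<in> U" using sU vec.subspace_diff by blast
      moreover have "y \<in> A" using yT T_def by blast
      ultimately have "y \<in> I" using AU by blast
      then have "y \<in> C" using IC by blast
      then show "x \<in> C" using cC yc(1) sC vec.subspace_add by blast
    qed
  qed
  have e1: "vec.dim (vec.span (vec.span (T \<union> C) \<union> Z)) + k = vec.dim (vec.span (T \<union> C)) + vec.dim Z"
    using dim_sum_int[OF vec.subspace_span sZ, of "T \<union> C"] d1 dC by simp
  have "T \<union> C \<subseteq> vec.span (C \<union> B)" using T_def vec.span_superset by blast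
  then have "vec.span (T \<union> C) \<subseteq> vec.span (C \<union> B)" using vec.span_minimal vec.subspace_span by blast
  then have "vec.span (T \<union> C) \<union> Z \<subseteq> vec.span (C \<union> B)" using ZCB by blast
  then have "vec.span (vec.span (T \<union> C) \<union> Z) \<subseteq> vec.span (C \<union> B)" using vec.span_minimal vec.subspace_span by blast
  then have e2: "vec.dim (vec.span (vec.span (T \<union> C) \<union> Z)) \<le> vec.dim (vec.span (C \<union> B))"
    by (metis vec.dim_span vec.dim_subset)
  have f1: "vec.dim (vec.span (C \<union> B)) + vec.dim (C \<inter> B) = k + k"
    using dim_sum_int[OF sC sB] dC dB by simp
  have f2: "r \<le> vec.dim (C \<inter> B)" unfolding r_def using IC by (intro vec.dim_subset) blast
  show False
  proof (cases "vec.dim (vec.span (C \<union> B)) \<le> 2 * k + d - 2 * i")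
    case True
    then have "vec.dim Z = vec.dim (vec.span (C \<union> B))" using dZ by simp
    then show False using e1 e2 c1 ra by linarith
  next
    case False
    then have "vec.dim Z = 2 * k + d - 2 * i" using dZ by simp
    moreover have "vec.dim (T \<inter> I) = r" using TI r_def by simp
    moreover have "2 * k + d - 2 * i + 2 * i = 2 * k + d" using id dk by simp
    ultimately show False using e1 e2 c1 ra f1 f2 b1 b2 id dk by linarith
  qed
qed

lemma card_field_ge2: "CARD('a::{finite,field}) \<ge> 2"
proof -
  have "card {0::'a, 1} \<le> CARD('a)" by (rule card_mono) auto
  then show ?thesis by simp
qed

lemma prod_real_diff:
  assumes "\<And>j. j < t \<Longrightarrow> b j \<le> (a::nat)"
  shows "real (\<Prod>j<t. a - b j) = (\<Prod>j<t. real a - real (b j))"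
  unfolding of_nat_prod using assms by (intro prod.cong) (auto simp: of_nat_diff)

lemma real_card_tgt:
  fixes I U V :: "('a::{finite,field} ^ 'n::finite) set"
  assumes sI: "vec.subspace I" and sU: "vec.subspace U" and sV: "vec.subspace V"
    and IU: "I \<subseteq> U" and UV: "U \<subseteq> V" and ut: "vec.dim U + t \<le> vec.dim V"
  shows "real (card {A. vec.subspace A \<and> vec.dim A = vec.dim I + t \<and> I \<subseteq> A \<and> A \<subseteq> V \<and> A \<inter> U = I})
       = Pq CARD('a) (vec.dim V) (vec.dim U) t / Pq CARD('a) (vec.dim I + t) (vec.dim I) t"
proof -
  let ?q = "CARD('a)"
  have q: "?q \<ge> 2" by (rule card_field_ge2)
  have e: "real (card {vs. length vs = t \<and> gseq V U vs})
       = real (card {A. vec.subspace A \<and> vec.dim A = vec.dim I + t \<and> I \<subseteq> A \<and> A \<subseteq> V \<and> A \<inter> U = I})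
         * real (\<Prod>j<t. ?q ^ (vec.dim I + t) - ?q ^ (vec.dim I + j))"
    unfolding count_tgt[OF sI sU sV IU UV] by simp
  have p1: "real (\<Prod>j<t. ?q ^ (vec.dim I + t) - ?q ^ (vec.dim I + j)) = Pq ?q (vec.dim I + t) (vec.dim I) t"
    unfolding Pq_def using q by (subst prod_real_diff) (auto intro: power_increasing simp: of_nat_power)
  have p2: "real (card {vs. length vs = t \<and> gseq V U vs}) = Pq ?q (vec.dim V) (vec.dim U) t"
    unfolding card_gseq[OF sV sU UV] Pq_def using q ut by (subst prod_real_diff) (auto intro: power_increasing simp: of_nat_power)
  have pos: "Pq ?q (vec.dim I + t) (vec.dim I) t > 0"
    unfolding Pq_def
  proof (rule prod_pos)
    fix j assume "j \<in> {..<t}"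
    then have "real ?q ^ (vec.dim I + j) < real ?q ^ (vec.dim I + t)" using q by (intro power_strict_increasing) auto
    then show "0 < real ?q ^ (vec.dim I + t) - real ?q ^ (vec.dim I + j)" by simp
  qed
  show ?thesis using e p1 p2 pos by (simp add: field_simps)
qed

lemma card_sub:
  fixes S :: "('a::{finite,field} ^ 'n::finite) set"
  assumes sS: "vec.subspace S" and l: "l \<le> vec.dim S"
  shows "real (card {I. vec.subspace I \<and> vec.dim I = l \<and> I \<subseteq> S}) = gauss_coef CARD('a) (int (vec.dim S)) (int l)"
proof -
  let ?Z = "vec.span ({} :: ('a ^ 'n) set)"
  have sZ: "vec.subspace ?Z" by simp
  have dZ: "vec.dim ?Z = 0" by simp
  have ZS: "?Z \<subseteq> S" using sS vec.subspace_0 by auto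
  have eq: "{A. vec.subspace A \<and> vec.dim A = l \<and> ?Z \<subseteq> A \<and> A \<subseteq> S \<and> A \<inter> ?Z = ?Z}
      = {I. vec.subspace I \<and> vec.dim I = l \<and> I \<subseteq> S}"
    using vec.subspace_0 by auto
  have "real (card {I. vec.subspace I \<and> vec.dim I = l \<and> I \<subseteq> S}) = Pq CARD('a) (vec.dim S) 0 l / Pq CARD('a) l 0 l"
  proof -
    have h: "real (card {A. vec.subspace A \<and> vec.dim A = vec.dim ?Z + l \<and> ?Z \<subseteq> A \<and> A \<subseteq> S \<and> A \<inter> ?Z = ?Z})
       = Pq CARD('a) (vec.dim S) (vec.dim ?Z) l / Pq CARD('a) (vec.dim ?Z + l) (vec.dim ?Z) l"
      by (rule real_card_tgt[OF sZ sZ sS order_refl ZS]) (use l dZ in simp)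
    show ?thesis using h unfolding dZ add_0 eq .
  qed
  also have "\<dots> = gauss_coef CARD('a) (int (vec.dim S)) (int l)"
    using gauss_Pq[OF card_field_ge2[where 'a='a] l] by simp
  finally show ?thesis .
qed




lemma span_Un_span_left:
  fixes X Y :: "('a::field ^ 'n::finite) set"
  shows "vec.span (vec.span X \<union> Y) = vec.span (X \<union> Y)"
  unfolding vec.span_eq
proof (intro conjI)
  show "vec.span X \<union> Y \<subseteq> vec.span (X \<union> Y)"
    using vec.span_mono[of X "X \<union> Y"] vec.span_superset[of "X \<union> Y"] by blast
  show "X \<union> Y \<subseteq> vec.span (vec.span X \<union> Y)"
    using vec.span_superset[of X] vec.span_superset[of "vec.span X \<union> Y"] by blast
qed

lemma dim_union_bound:
  fixes C :: "('a::field ^ 'n::finite) set" and Z :: "'b \<Rightarrow> ('a ^ 'n) set"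
  assumes fin: "finite F" and sC: "vec.subspace C"
    and Z: "\<And>B. B \<in> F \<Longrightarrow> vec.subspace (Z B) \<and> C \<subseteq> Z B \<and> vec.dim (Z B) \<le> vec.dim C + m"
  shows "vec.dim (vec.span (C \<union> \<Union>(Z ` F))) \<le> vec.dim C + card F * m"
  using fin Z
proof (induction F rule: finite_induct)
  case empty
  then show ?case using sC by (simp add: span_of_subspace)
next
  case (insert B F)
  let ?X = "vec.span (C \<union> \<Union>(Z ` F))"
  have IH: "vec.dim ?X \<le> vec.dim C + card F * m" using insert by auto
  have ZB: "vec.subspace (Z B)" "C \<subseteq> Z B" "vec.dim (Z B) \<le> vec.dim C + m" using insert.prems by auto
  have eqs: "vec.span (C \<union> \<Union>(Z ` insert B F)) = vec.span (?X \<union> Z B)"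
    unfolding span_Un_span_left by (simp add: Un_ac)
  have ds: "vec.dim (vec.span (?X \<union> Z B)) + vec.dim (?X \<inter> Z B) = vec.dim ?X + vec.dim (Z B)"
    by (rule dim_sum_int[OF vec.subspace_span ZB(1)])
  have "C \<subseteq> ?X \<inter> Z B" using ZB(2) vec.span_superset by blast
  then have "vec.dim C \<le> vec.dim (?X \<inter> Z B)" by (rule vec.dim_subset)
  then show ?case unfolding eqs using ds IH ZB(3) insert.hyps by simp
qed

lemma card_Sub_minus:
  fixes X Y W :: "('a::{finite,field} ^ 'n::finite) set"
  assumes "W \<subseteq> X" "W \<subseteq> Y"
  shows "card ({I. vec.subspace I \<and> vec.dim I = i \<and> I \<subseteq> X} - {I. vec.subspace I \<and> vec.dim I = i \<and> I \<subseteq> Y})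
       \<le> card {I. vec.subspace I \<and> vec.dim I = i \<and> I \<subseteq> X} - card {I. vec.subspace I \<and> vec.dim I = i \<and> I \<subseteq> W}"
proof -
  let ?S = "\<lambda>X. {I. vec.subspace (I::('a^'n) set) \<and> vec.dim I = i \<and> I \<subseteq> X}"
  have "?S X - ?S Y \<subseteq> ?S X - ?S W" using assms by auto
  then have "card (?S X - ?S Y) \<le> card (?S X - ?S W)" by (intro card_mono) (auto intro: finite_subspaces_set)
  also have "\<dots> = card (?S X) - card (?S W)"
    using assms by (intro card_Diff_subset) (auto intro: finite_subspaces_set)
  finally show ?thesis .
qed

lemma good_count:
  fixes C :: "('a::{finite,field} ^ 'n::finite) set" and H :: "'b \<Rightarrow> ('a ^ 'n) set"
  assumes sC: "vec.subspace C" and dC: "vec.dim C = k" and fin: "finite Cs" and cs: "card Cs = s" and s1: "s \<ge> 1"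
    and H: "\<And>B. B \<in> Cs \<Longrightarrow> vec.subspace (H B) \<and> H B \<subseteq> C \<and> vec.dim (H B) = k - 1"
    and i1: "1 \<le> i" and ik: "i + 2 \<le> k"
  shows "real (card {I. vec.subspace I \<and> vec.dim I = i \<and> I \<subseteq> C \<and> (\<forall>B\<in>Cs. \<not> I \<subseteq> H B)})
     \<ge> gauss_coef CARD('a) (int k) (int i) - gauss_coef CARD('a) (int (k - 1)) (int i)
        - (real s - 1) * (gauss_coef CARD('a) (int (k - 1)) (int i) - gauss_coef CARD('a) (int (k - 2)) (int i))"
proof -
  let ?S = "\<lambda>X. {I. vec.subspace (I::('a^'n) set) \<and> vec.dim I = i \<and> I \<subseteq> X}"
  let ?g = "\<lambda>m. gauss_coef CARD('a) (int m) (int i)"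
  let ?Bad = "\<Union>B\<in>Cs. ?S (H B)"
  have good: "{I. vec.subspace I \<and> vec.dim I = i \<and> I \<subseteq> C \<and> (\<forall>B\<in>Cs. \<not> I \<subseteq> H B)} = ?S C - ?Bad" by auto
  have BadC: "?Bad \<subseteq> ?S C" using H by blast
  have cg: "real (card (?S C - ?Bad)) = real (card (?S C)) - real (card ?Bad)"
    using card_Diff_subset[OF finite_subspaces_set BadC] card_mono[OF finite_subspaces_set BadC] by simp
  have SC: "real (card (?S C)) = ?g k" using card_sub[OF sC] dC ik by simp
  obtain B0 where B0: "B0 \<in> Cs" using s1 cs by fastforce
  have HB0: "vec.subspace (H B0)" "H B0 \<subseteq> C" "vec.dim (H B0) = k - 1" using H[OF B0] by auto
  have sub: "?Bad \<subseteq> ?S (H B0) \<union> (\<Union>B\<in>Cs - {B0}. ?S (H B) - ?S (H B0))" by blast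
  have "card ?Bad \<le> card (?S (H B0) \<union> (\<Union>B\<in>Cs - {B0}. ?S (H B) - ?S (H B0)))"
    by (rule card_mono[OF finite_subspaces_set sub])
  also have "\<dots> \<le> card (?S (H B0)) + card (\<Union>B\<in>Cs - {B0}. ?S (H B) - ?S (H B0))" by (rule card_Un_le)
  also have "\<dots> \<le> card (?S (H B0)) + (\<Sum>B\<in>Cs - {B0}. card (?S (H B) - ?S (H B0)))"
    by (rule add_left_mono, rule card_UN_le, rule finite_Diff[OF fin])
  finally have cbn: "card ?Bad \<le> card (?S (H B0)) + (\<Sum>B\<in>Cs - {B0}. card (?S (H B) - ?S (H B0)))" .
  then have "real (card ?Bad) \<le> real (card (?S (H B0)) + (\<Sum>B\<in>Cs - {B0}. card (?S (H B) - ?S (H B0))))"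
    by (simp only: of_nat_le_iff)
  then have cb: "real (card ?Bad) \<le> real (card (?S (H B0))) + (\<Sum>B\<in>Cs - {B0}. real (card (?S (H B) - ?S (H B0))))"
    by (simp only: of_nat_add of_nat_sum)
  have each: "real (card (?S (H B) - ?S (H B0))) \<le> ?g (k - 1) - ?g (k - 2)" if B: "B \<in> Cs" for B
  proof -
    have HB: "vec.subspace (H B)" "H B \<subseteq> C" "vec.dim (H B) = k - 1" using H[OF B] by auto
    have sI: "vec.subspace (H B \<inter> H B0)" using HB HB0 vec.subspace_inter by blast
    have ds: "vec.dim (vec.span (H B \<union> H B0)) + vec.dim (H B \<inter> H B0) = (k - 1) + (k - 1)"
      using dim_sum_int[OF HB(1) HB0(1)] HB HB0 by simp
    have "vec.span (H B \<union> H B0) \<subseteq> C" using HB HB0 sC vec.span_minimal[of "H B \<union> H B0" C] by blast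
    then have "vec.dim (vec.span (H B \<union> H B0)) \<le> k" using dC by (metis vec.dim_subset vec.dim_span)
    then have dI: "k - 2 \<le> vec.dim (H B \<inter> H B0)" using ds by linarith
    obtain W where W: "vec.subspace W" "vec.span {} \<subseteq> W" "W \<subseteq> H B \<inter> H B0" "vec.dim W = k - 2"
      using exists_intermediate[of "vec.span {}" "H B \<inter> H B0" "k - 2"] sI dI vec.subspace_0[OF sI] by auto
    have "card (?S (H B) - ?S (H B0)) \<le> card (?S (H B)) - card (?S W)"
      by (rule card_Sub_minus) (use W in auto)
    moreover have "card (?S W) \<le> card (?S (H B))" using W by (intro card_mono[OF finite_subspaces_set]) auto
    ultimately have "real (card (?S (H B) - ?S (H B0))) \<le> real (card (?S (H B))) - real (card (?S W))" by linarith
    also have "\<dots> = ?g (k - 1) - ?g (k - 2)" using card_sub[OF HB(1)] card_sub[OF W(1)] HB(3) W(4) ik by simp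
    finally show ?thesis .
  qed
  have "(\<Sum>B\<in>Cs - {B0}. real (card (?S (H B) - ?S (H B0)))) \<le> (\<Sum>B\<in>Cs - {B0}. ?g (k - 1) - ?g (k - 2))"
    by (rule sum_mono) (use each in auto)
  also have "\<dots> = (real s - 1) * (?g (k - 1) - ?g (k - 2))"
    using cs B0 fin s1 by (simp add: card_Diff_subset of_nat_diff)
  finally have cb2: "(\<Sum>B\<in>Cs - {B0}. real (card (?S (H B) - ?S (H B0)))) \<le> (real s - 1) * (?g (k - 1) - ?g (k - 2))" .
  have SB0: "real (card (?S (H B0))) = ?g (k - 1)" using card_sub[OF HB0(1)] HB0(3) ik by simp
  show ?thesis unfolding good cg SC using cb cb2 SB0 by linarith
qed




lemma Pq_pos: "q \<ge> 2 \<Longrightarrow> b + t \<le> a \<Longrightarrow> Pq q a b t > 0"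
  unfolding Pq_def
proof (rule prod_pos)
  fix j assume "q \<ge> 2" "b + t \<le> a" "j \<in> {..<t}"
  then have "real q ^ (b + j) < real q ^ a" by (intro power_strict_increasing) auto
  then show "0 < real q ^ a - real q ^ (b + j)" by simp
qed

lemma Pq_mono: "q \<ge> 2 \<Longrightarrow> b \<le> b' \<Longrightarrow> b' + t \<le> a \<Longrightarrow> Pq q a b' t \<le> Pq q a b t"
  unfolding Pq_def
proof (rule prod_mono, clarify)
  fix j assume "q \<ge> 2" "b \<le> b'" "b' + t \<le> a" "j < t"
  then have "real q ^ (b' + j) \<le> real q ^ a" "real q ^ (b + j) \<le> real q ^ (b' + j)"
    by (intro power_increasing; simp)+
  then show "0 \<le> real q ^ a - real q ^ (b' + j) \<and> real q ^ a - real q ^ (b' + j) \<le> real q ^ a - real q ^ (b + j)"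
    by simp
qed

lemma dim_UNIV_vec: "vec.dim (UNIV :: ('a::field ^ 'n::finite) set) = CARD('n)"
  by (simp add: card_cart_basis)

lemma part1:
  fixes q i d k n s :: nat
  assumes field_card: "CARD('a::{finite,field}) = q"
      and dim_n: "CARD('n::finite) = n"
      and i1: "i > 0" and id: "i \<le> d" and dk: "d < k"
      and ki: "k - i \<ge> 2"
      and n_big: "int n - int k - int s * (int k + int d - 2 * int i) \<ge> int d - int i"
      and s1: "1 \<le> s"
  shows "M_disjunct TYPE('a) TYPE('n) i d k s (e2bar q i d k n s)"
  unfolding M_disjunct_def
proof (intro ballI allI impI)
  fix C :: "('a ^ 'n) set" and Cs
  assume C: "C \<in> subspaces_of_dim k" and Cs: "Cs \<subseteq> subspaces_of_dim k \<and> C \<notin> Cs \<and> card Cs = s"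
  have q2: "q \<ge> 2" using card_field_ge2[where 'a='a] field_card by simp
  have sC: "vec.subspace C" and dC: "vec.dim C = k" using C unfolding subspaces_of_dim_def by auto
  have fin: "finite Cs" by (rule finite_subspaces_set)
  have cs: "card Cs = s" using Cs by simp
  have sB: "vec.subspace B" "vec.dim B = k" "B \<noteq> C" if "B \<in> Cs" for B
    using that Cs unfolding subspaces_of_dim_def by auto
  define t where "t = d - i"
  define m0 where "m0 = k + d - 2 * i"
  define u0 where "u0 = k + s * m0"
  have "\<forall>B\<in>Cs. \<exists>H. vec.subspace H \<and> C \<inter> B \<subseteq> H \<and> H \<subseteq> C \<and> vec.dim H = k - 1"
  proof
    fix B assume B: "B \<in> Cs"
    have sCB: "vec.subspace (C \<inter> B)" using sC sB[OF B] vec.subspace_inter by blast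
    have le: "vec.dim (C \<inter> B) \<le> k" using dC vec.dim_subset[of "C \<inter> B" C] by auto
    have "vec.dim (C \<inter> B) \<noteq> k"
    proof
      assume "vec.dim (C \<inter> B) = k"
      then have "C \<inter> B = C" using vec.subspace_dim_equal[OF sCB sC] dC by auto
      then have "C \<subseteq> B" by blast
      then have "C = B" using vec.subspace_dim_equal[OF sC sB(1)[OF B]] dC sB(2)[OF B] by auto
      then show False using sB(3)[OF B] by simp
    qed
    then have "vec.dim (C \<inter> B) \<le> k - 1" using le by simp
    then obtain H where "vec.subspace H" "C \<inter> B \<subseteq> H" "H \<subseteq> C" "vec.dim H = k - 1"
      using exists_intermediate[OF sCB sC, of "k - 1"] dC by auto
    then show "\<exists>H. vec.subspace H \<and> C \<inter> B \<subseteq> H \<and> H \<subseteq> C \<and> vec.dim H = k - 1" by blast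
  qed
  then obtain H where H: "\<And>B. B \<in> Cs \<Longrightarrow> vec.subspace (H B) \<and> C \<inter> B \<subseteq> H B \<and> H B \<subseteq> C \<and> vec.dim (H B) = k - 1"
    by metis
  have "\<forall>B\<in>Cs. \<exists>Z. vec.subspace Z \<and> C \<subseteq> Z \<and> Z \<subseteq> vec.span (C \<union> B)
          \<and> vec.dim Z = min (vec.dim (vec.span (C \<union> B))) (2 * k + d - 2 * i)"
  proof
    fix B assume B: "B \<in> Cs"
    have CS: "C \<subseteq> vec.span (C \<union> B)" using vec.span_superset by blast
    have "k \<le> vec.dim (vec.span (C \<union> B))" using vec.dim_subset[OF CS] dC by simp
    moreover have "k \<le> 2 * k + d - 2 * i" using id dk by linarith
    ultimately have m1: "vec.dim C \<le> min (vec.dim (vec.span (C \<union> B))) (2 * k + d - 2 * i)" using dC by simp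
    have m2: "min (vec.dim (vec.span (C \<union> B))) (2 * k + d - 2 * i) \<le> vec.dim (vec.span (C \<union> B))" by simp
    obtain Z where "vec.subspace Z" "C \<subseteq> Z" "Z \<subseteq> vec.span (C \<union> B)"
        "vec.dim Z = min (vec.dim (vec.span (C \<union> B))) (2 * k + d - 2 * i)"
      using exists_intermediate[OF sC vec.subspace_span CS m1 m2] by blast
    then show "\<exists>Z. vec.subspace Z \<and> C \<subseteq> Z \<and> Z \<subseteq> vec.span (C \<union> B)
          \<and> vec.dim Z = min (vec.dim (vec.span (C \<union> B))) (2 * k + d - 2 * i)" by blast
  qed
  then obtain Z where Z: "\<And>B. B \<in> Cs \<Longrightarrow> vec.subspace (Z B) \<and> C \<subseteq> Z B \<and> Z B \<subseteq> vec.span (C \<union> B)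
          \<and> vec.dim (Z B) = min (vec.dim (vec.span (C \<union> B))) (2 * k + d - 2 * i)"
    by metis
  define U where "U = vec.span (C \<union> \<Union>(Z ` Cs))"
  have sU: "vec.subspace U" unfolding U_def by simp
  have CU: "C \<subseteq> U" unfolding U_def using vec.span_superset by blast
  have ZU: "Z B \<subseteq> U" if "B \<in> Cs" for B
  proof -
    have "Z B \<subseteq> C \<union> \<Union>(Z ` Cs)" using that by blast
    then show ?thesis unfolding U_def using vec.span_superset by (rule order_trans)
  qed
  have dU: "vec.dim U \<le> u0"
  proof -
    have "vec.dim U \<le> vec.dim C + card Cs * m0"
      unfolding U_def
    proof (rule dim_union_bound[OF fin sC])
      fix B assume "B \<in> Cs"
      then show "vec.subspace (Z B) \<and> C \<subseteq> Z B \<and> vec.dim (Z B) \<le> vec.dim C + m0"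
        using Z[of B] dC unfolding m0_def by auto
    qed
    then show ?thesis unfolding u0_def using dC cs by simp
  qed
  have m0i: "int m0 = int k + int d - 2 * int i" unfolding m0_def using id dk by simp
  have nu0: "u0 + t \<le> n"
  proof -
    have h: "int s * (int k + int d - 2 * int i) = int s * int m0" using m0i by simp
    have h2: "int (u0 + t) = int k + int s * int m0 + (int d - int i)" unfolding u0_def t_def using id by simp
    have "int (u0 + t) \<le> int n" using h h2 n_big by linarith
    then show ?thesis by (simp only: of_nat_le_iff)
  qed
  have dimV: "vec.dim (UNIV :: ('a ^ 'n) set) = n" using dim_UNIV_vec[where 'a='a and 'n='n] dim_n by simp
  define good where "good = {I. vec.subspace I \<and> vec.dim I = i \<and> I \<subseteq> C \<and> (\<forall>B\<in>Cs. \<not> I \<subseteq> H B)}"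
  define Tgt where "Tgt = (\<lambda>I. {A. vec.subspace A \<and> vec.dim A = vec.dim I + t \<and> I \<subseteq> A \<and> A \<subseteq> (UNIV :: ('a ^ 'n) set) \<and> A \<inter> U = I})"
  define TS where "TS = {A \<in> (subspaces_of_dim d :: ('a ^ 'n) set set). Mentry i A C \<and> (\<forall>B\<in>Cs. \<not> Mentry i A B)}"
  have incl: "(\<Union>I\<in>good. Tgt I) \<subseteq> TS"
  proof clarify
    fix I A assume I: "I \<in> good" and A: "A \<in> Tgt I"
    have sI: "vec.subspace I" "vec.dim I = i" "I \<subseteq> C" "\<forall>B\<in>Cs. \<not> I \<subseteq> H B" using I unfolding good_def by auto
    have sA: "vec.subspace A" "vec.dim A = d" "I \<subseteq> A" "A \<inter> U = I" using A sI(2) id unfolding Tgt_def t_def by auto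
    have AC: "A \<inter> C = I" using sA(3,4) sI(3) CU by blast
    have "\<not> Mentry i A B" if B: "B \<in> Cs" for B
    proof -
      have IB: "\<not> I \<subseteq> B" using sI(3,4) H[OF B] B by blast
      show ?thesis unfolding Mentry_def
        by (rule key_avoid[OF sA(1) sB(1)[OF B] sC sI(1) sU, of "Z B" k i d])
           (use Z[OF B] sB[OF B] dC sI sA CU ZU[OF B] IB id dk in auto)
    qed
    then show "A \<in> TS" unfolding TS_def subspaces_of_dim_def Mentry_def using sA AC sI(2) by auto
  qed
  have disj: "\<forall>I\<in>good. \<forall>J\<in>good. I \<noteq> J \<longrightarrow> Tgt I \<inter> Tgt J = {}" unfolding Tgt_def by blast
  have "card (\<Union>I\<in>good. Tgt I) \<le> card TS" by (rule card_mono[OF finite_subspaces_set incl])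
  moreover have "card (\<Union>I\<in>good. Tgt I) = (\<Sum>I\<in>good. card (Tgt I))"
    by (rule card_UN_disjoint[OF finite_subspaces_set _ disj]) (auto intro: finite_subspaces_set)
  ultimately have cTS: "real (card TS) \<ge> (\<Sum>I\<in>good. real (card (Tgt I)))"
    by (metis of_nat_le_iff of_nat_sum)
  define Q where "Q = Pq q n (vec.dim U) t / Pq q d i t"
  have cT: "real (card (Tgt I)) = Q" if "I \<in> good" for I
  proof -
    have sI: "vec.subspace I" "vec.dim I = i" "I \<subseteq> C" using that unfolding good_def by auto
    have "real (card (Tgt I)) = Pq CARD('a) (vec.dim (UNIV :: ('a ^ 'n) set)) (vec.dim U) t / Pq CARD('a) (vec.dim I + t) (vec.dim I) t"
      unfolding Tgt_def
      by (rule real_card_tgt[OF sI(1) sU vec.subspace_UNIV]) (use sI CU dU nu0 dimV in auto)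
    then show ?thesis unfolding Q_def using field_card dimV sI(2) id t_def by simp
  qed
  have "(\<Sum>I\<in>good. real (card (Tgt I))) = real (card good) * Q" using cT by simp
  then have TSQ: "real (card TS) \<ge> real (card good) * Q" using cTS by simp
  define Q0 where "Q0 = Pq q n u0 t / Pq q d i t"
  have Pd: "Pq q d i t > 0" using Pq_pos[OF q2, of i t d] id t_def by simp
  have QQ0: "Q \<ge> Q0" unfolding Q_def Q0_def
    using Pq_mono[OF q2 dU, of t n] nu0 Pd by (simp add: divide_right_mono)
  have Q0nn: "Q0 \<ge> 0" unfolding Q0_def using Pq_pos[OF q2, of u0 t n] nu0 Pd by simp
  have Q0eq: "Q0 = real q ^ (t * (u0 - i)) * gauss_coef q (int (n - u0)) (int t)"
  proof -
    have iu: "i \<le> u0" using id dk unfolding u0_def by simp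
    have a: "Pq q n u0 t = real q ^ (u0 * t) * Pq q (n - u0) 0 t" using Pq_shift[of u0 n q t] nu0 by simp
    have b: "Pq q d i t = real q ^ (i * t) * Pq q t 0 t" using Pq_shift[of i d q t] id t_def by simp
    have g: "gauss_coef q (int (n - u0)) (int t) = Pq q (n - u0) 0 t / Pq q t 0 t"
      using gauss_Pq[OF q2, of t "n - u0"] nu0 by simp
    obtain w where w: "u0 = i + w" using iu le_Suc_ex by blast
    have pw: "real q ^ (u0 * t) = real q ^ (t * (u0 - i)) * real q ^ (i * t)"
      unfolding w by (simp add: power_add[symmetric] algebra_simps)
    have pos: "real q ^ (i * t) > 0" using q2 by simp
    show ?thesis unfolding Q0_def a b g pw using pos q2 by simp
  qed
  define X where "X = real q ^ (k - i) * gauss_coef q (int k - 1) (int i - 1)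
        - (real s - 1) * real q ^ (k - i - 1) * gauss_coef q (int k - 2) (int i - 1)"
  have goodX: "real (card good) \<ge> X"
  proof -
    have gc: "real (card good) \<ge> gauss_coef q (int k) (int i) - gauss_coef q (int (k - 1)) (int i)
        - (real s - 1) * (gauss_coef q (int (k - 1)) (int i) - gauss_coef q (int (k - 2)) (int i))"
      unfolding good_def field_card[symmetric]
      by (rule good_count[OF sC dC fin cs s1]) (use H i1 ki in auto)
    have p1: "gauss_coef q (int k) (int i) - gauss_coef q (int (k - 1)) (int i)
        = real q ^ (k - i) * gauss_coef q (int k - 1) (int i - 1)"
    proof -
      have "gauss_coef q (int (Suc (k - 1))) (int (Suc (i - 1))) - gauss_coef q (int (k - 1)) (int (Suc (i - 1)))
          = real q ^ ((k - 1) - (i - 1)) * gauss_coef q (int (k - 1)) (int (i - 1))"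
        by (rule gauss_pascal[OF q2]) (use ki i1 in simp)
      moreover have "Suc (k - 1) = k" "Suc (i - 1) = i" "(k - 1) - (i - 1) = k - i" using ki i1 by auto
      moreover have "int (k - 1) = int k - 1" "int (i - 1) = int i - 1" using ki i1 by auto
      ultimately show ?thesis by simp
    qed
    have p2: "gauss_coef q (int (k - 1)) (int i) - gauss_coef q (int (k - 2)) (int i)
        = real q ^ (k - i - 1) * gauss_coef q (int k - 2) (int i - 1)"
    proof -
      have "gauss_coef q (int (Suc (k - 2))) (int (Suc (i - 1))) - gauss_coef q (int (k - 2)) (int (Suc (i - 1)))
          = real q ^ ((k - 2) - (i - 1)) * gauss_coef q (int (k - 2)) (int (i - 1))"
        by (rule gauss_pascal[OF q2]) (use ki i1 in simp)
      moreover have "Suc (k - 2) = k - 1" "Suc (i - 1) = i" "(k - 2) - (i - 1) = k - i - 1" using ki i1 by auto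
      moreover have "int (k - 2) = int k - 2" "int (i - 1) = int i - 1" using ki i1 by auto
      ultimately show ?thesis by simp
    qed
    show ?thesis using gc unfolding X_def p1 p2 by (simp add: algebra_simps)
  qed
  have e2: "e2bar q i d k n s + 1 = Q0 * X"
  proof -
    have i1': "int n - int k - int s * (int k + int d - 2 * int i) = int (n - u0)"
      using nu0 m0i unfolding u0_def by (simp add: of_nat_diff)
    have i2: "int d - int i = int t" unfolding t_def using id by simp
    have ex: "(d - i) * (k + s * (k + d - 2 * i) - i) = t * (u0 - i)" unfolding t_def u0_def m0_def ..
    show ?thesis unfolding e2bar_def i1' i2 ex Q0eq X_def by simp
  qed
  have "real (card good) * Q \<ge> X * Q0"
  proof -
    have "real (card good) * Q \<ge> real (card good) * Q0" using QQ0 by (intro mult_left_mono) auto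
    moreover have "real (card good) * Q0 \<ge> X * Q0" using goodX Q0nn by (intro mult_right_mono) auto
    ultimately show ?thesis by linarith
  qed
  then show "e2bar q i d k n s + 1 \<le> real (card TS)" using TSQ e2 by (simp add: mult.commute)
qed




lemma gauss_pos: "q \<ge> 2 \<Longrightarrow> l \<le> m \<Longrightarrow> gauss_coef q (int m) (int l) > 0"
  using gauss_Aq[of l m q] Aq_pos[of q l m] Aq_pos[of q l l] by simp

lemma pow_ge_self: "q \<ge> 2 \<Longrightarrow> real q ^ j \<ge> real j"
proof -
  assume q: "q \<ge> 2"
  have "real j \<le> 2 ^ j" using less_exp[of j] by (metis of_nat_le_iff of_nat_numeral of_nat_power less_imp_le)
  also have "(2::real) ^ j \<le> real q ^ j" using q by (intro power_mono) auto
  finally show ?thesis .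
qed

lemma part2:
  fixes q i d k s :: nat
  assumes q2: "q \<ge> 2"
      and i1: "i > 0" and id: "i < d" and dk: "d < k"
      and s1: "1 \<le> s"
      and s_bd: "real s \<le> real q * (real q ^ (k - 1) - 1) / (real q ^ (k - i) - 1)"
  shows "filterlim (\<lambda>m. (e2bar q i d k m s + 1) / (e1bar q d k s + 1)) at_top at_top"
proof -
  define t where "t = d - i"
  define m0 where "m0 = k + d - 2 * i"
  define u0 where "u0 = k + s * m0"
  have t1: "1 \<le> t" using id unfolding t_def by simp
  define X where "X = real q ^ (k - i) * gauss_coef q (int k - 1) (int i - 1)
        - (real s - 1) * real q ^ (k - i - 1) * gauss_coef q (int k - 2) (int i - 1)"
  define Y where "Y = e1bar q d k s + 1"
  have Xpos: "X > 0"
  proof -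
    have ki: "i \<le> k - 2" using id dk by simp
    have r: "gauss_coef q (int (Suc (k - 2))) (int (i - 1)) * (real q ^ (Suc (k - 2) - (i - 1)) - 1)
       = gauss_coef q (int (k - 2)) (int (i - 1)) * (real q ^ Suc (k - 2) - 1)"
      by (rule gauss_ratio[OF q2]) (use ki in simp)
    have e: "Suc (k - 2) = k - 1" "Suc (k - 2) - (i - 1) = k - i" "int (k - 1) = int k - 1" "int (k - 2) = int k - 2"
      "int (i - 1) = int i - 1" "k - 1 - (i - 1) = k - i" using ki i1 by auto
    define G1 where "G1 = gauss_coef q (int k - 1) (int i - 1)"
    define G2 where "G2 = gauss_coef q (int k - 2) (int i - 1)"
    have r': "G1 * (real q ^ (k - i) - 1) = G2 * (real q ^ (k - 1) - 1)" using r unfolding e G1_def G2_def .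
    have G2p: "G2 > 0" unfolding G2_def using gauss_pos[OF q2, of "i - 1" "k - 2"] ki e by simp
    have D: "real q ^ (k - i) - 1 > 0" using qpow_gt1[OF q2, of "k - i"] id dk by simp
    have "real s - 1 < real q * (real q ^ (k - 1) - 1) / (real q ^ (k - i) - 1)" using s_bd by simp
    also have "\<dots> = real q * G1 / G2"
    proof -
      have "(real q ^ (k - 1) - 1) / (real q ^ (k - i) - 1) = G1 / G2"
        using r' D G2p by (simp add: frac_eq_eq mult.commute)
      then show ?thesis by (metis times_divide_eq_right)
    qed
    finally have "(real s - 1) * G2 < real q * G1" using G2p by (simp add: field_simps)
    then have "(real s - 1) * G2 * real q ^ (k - i - 1) < real q * G1 * real q ^ (k - i - 1)"
      using q2 by (intro mult_strict_right_mono) auto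
    moreover have "real q * real q ^ (k - i - 1) = real q ^ (k - i)"
      using id dk by (metis Suc_diff_Suc diff_Suc_1 diff_less_mono2 less_trans_Suc power_Suc zero_less_diff order.strict_trans i1)
    ultimately show ?thesis unfolding X_def G1_def[symmetric] G2_def[symmetric] by (simp add: algebra_simps)
  qed
  have Ypos: "Y > 0"
  proof -
    have kd: "d - 1 \<le> k - 2" using id dk by simp
    have r: "gauss_coef q (int (Suc (k - 2))) (int (d - 1)) * (real q ^ (Suc (k - 2) - (d - 1)) - 1)
       = gauss_coef q (int (k - 2)) (int (d - 1)) * (real q ^ Suc (k - 2) - 1)"
      by (rule gauss_ratio[OF q2]) (use kd in simp)
    have e: "Suc (k - 2) = k - 1" "Suc (k - 2) - (d - 1) = k - d" "int (k - 1) = int k - 1" "int (k - 2) = int k - 2"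
      "int (d - 1) = int d - 1" "k - 1 - (d - 1) = k - d" using kd id dk i1 by auto
    define G1 where "G1 = gauss_coef q (int k - 1) (int d - 1)"
    define G2 where "G2 = gauss_coef q (int k - 2) (int d - 1)"
    have r': "G1 * (real q ^ (k - d) - 1) = G2 * (real q ^ (k - 1) - 1)" using r unfolding e G1_def G2_def .
    have G2p: "G2 > 0" unfolding G2_def using gauss_pos[OF q2, of "d - 1" "k - 2"] kd e by simp
    have D: "real q ^ (k - d) - 1 > 0" using qpow_gt1[OF q2, of "k - d"] dk by simp
    have Di: "real q ^ (k - d) - 1 \<le> real q ^ (k - i) - 1" using q2 id by (simp add: power_increasing)
    have N: "real q * (real q ^ (k - 1) - 1) \<ge> 0" using q2 by simp
    have "real s - 1 < real q * (real q ^ (k - 1) - 1) / (real q ^ (k - i) - 1)" using s_bd by simp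
    also have "\<dots> \<le> real q * (real q ^ (k - 1) - 1) / (real q ^ (k - d) - 1)"
      using D Di N by (intro divide_left_mono) auto
    also have "\<dots> = real q * G1 / G2"
    proof -
      have "(real q ^ (k - 1) - 1) / (real q ^ (k - d) - 1) = G1 / G2"
        using r' D G2p by (simp add: frac_eq_eq mult.commute)
      then show ?thesis by (metis times_divide_eq_right)
    qed
    finally have "(real s - 1) * G2 < real q * G1" using G2p by (simp add: field_simps)
    then have "(real s - 1) * G2 * real q ^ (k - d - 1) < real q * G1 * real q ^ (k - d - 1)"
      using q2 by (intro mult_strict_right_mono) auto
    moreover have "real q * real q ^ (k - d - 1) = real q ^ (k - d)"
      using dk by (metis Suc_diff_Suc diff_Suc_1 power_Suc zero_less_diff)
    ultimately show ?thesis unfolding Y_def e1bar_def G1_def[symmetric] G2_def[symmetric] by (simp add: algebra_simps)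
  qed
  define c where "c = real q ^ (t * (u0 - i)) * X / (Y * (real q ^ t - 1))"
  have Dt: "real q ^ t - 1 > 0" using qpow_gt1[OF q2 t1] .
  have cpos: "c > 0" unfolding c_def using Xpos Ypos Dt q2 by simp
  have m0i: "int m0 = int k + int d - 2 * int i" unfolding m0_def using id dk by simp
  have bound: "(e2bar q i d k m s + 1) / (e1bar q d k s + 1) \<ge> c * (real (m - u0) - 1)" if m: "m \<ge> u0 + t" for m
  proof -
    have i1': "int m - int k - int s * (int k + int d - 2 * int i) = int (m - u0)"
      using m m0i unfolding u0_def by (simp add: of_nat_diff)
    have i2: "int d - int i = int t" unfolding t_def using id by simp
    have ex: "(d - i) * (k + s * (k + d - 2 * i) - i) = t * (u0 - i)" unfolding t_def u0_def m0_def ..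
    have e2: "e2bar q i d k m s + 1 = real q ^ (t * (u0 - i)) * gauss_coef q (int (m - u0)) (int t) * X"
      unfolding e2bar_def i1' i2 ex X_def by simp
    have gl: "gauss_coef q (int (m - u0)) (int t) \<ge> (real q ^ (m - u0) - 1) / (real q ^ t - 1)"
      by (rule gauss_lower[OF q2 t1]) (use m in simp)
    have "(e2bar q i d k m s + 1) / (e1bar q d k s + 1) = real q ^ (t * (u0 - i)) * X / Y * gauss_coef q (int (m - u0)) (int t)"
      unfolding e2 Y_def[symmetric] by simp
    also have "\<dots> \<ge> real q ^ (t * (u0 - i)) * X / Y * ((real q ^ (m - u0) - 1) / (real q ^ t - 1))"
      using gl Xpos Ypos q2 by (intro mult_left_mono) auto
    finally have "(e2bar q i d k m s + 1) / (e1bar q d k s + 1) \<ge> c * (real q ^ (m - u0) - 1)"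
      unfolding c_def by simp
    moreover have "c * (real q ^ (m - u0) - 1) \<ge> c * (real (m - u0) - 1)"
      using pow_ge_self[OF q2, of "m - u0"] cpos by (intro mult_left_mono) auto
    ultimately show ?thesis by linarith
  qed
  show ?thesis
    unfolding filterlim_at_top
  proof
    fix Z :: real
    define N where "N = nat \<lceil>Z / c\<rceil> + u0 + t + 1"
    show "\<forall>\<^sub>F m in at_top. Z \<le> (e2bar q i d k m s + 1) / (e1bar q d k s + 1)"
      unfolding eventually_at_top_linorder
    proof (intro exI allI impI)
      fix m assume mN: "N \<le> m"
      then have mu: "m \<ge> u0 + t" unfolding N_def by simp
      have "real (m - u0) - 1 \<ge> real (nat \<lceil>Z / c\<rceil>)" using mN unfolding N_def by simp
      moreover have "real (nat \<lceil>Z / c\<rceil>) \<ge> Z / c" by linarith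
      ultimately have "real (m - u0) - 1 \<ge> Z / c" by linarith
      then have "c * (real (m - u0) - 1) \<ge> c * (Z / c)" using cpos by (intro mult_left_mono) auto
      then have "c * (real (m - u0) - 1) \<ge> Z" using cpos by simp
      then show "Z \<le> (e2bar q i d k m s + 1) / (e1bar q d k s + 1)" using bound[OF mu] by linarith
    qed
  qed
qed


theorem theorem1p4:
  fixes q i d k n s :: nat
  assumes field_card: "CARD('a::{finite,field}) = q"
      and dim_n: "CARD('n::finite) = n"
      and q_pp: "\<exists>p m. prime p \<and> m > 0 \<and> q = p ^ m"
      and pos: "i > 0" "d > 0" "k > 0" "n > 0" "s > 0"
      and i_lo: "(d + 1) div 2 \<le> i" and "i \<le> d" and "d < k"
      and "k - i \<ge> 2"
      and n_big: "int n - int k - int s * (int k + int d - 2 * int i) \<ge> int d - int i"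
      and s_bd: "1 \<le> s"
        "real s \<le> real q * (real q ^ (k - 1) - 1) / (real q ^ (k - i) - 1)"
  shows "M_disjunct TYPE('a) TYPE('n) i d k s (e2bar q i d k n s)
         \<and> (i < d \<longrightarrow>
              filterlim (\<lambda>m. (e2bar q i d k m s + 1) / (e1bar q d k s + 1)) at_top at_top)"
  proof -
  have q2: "q \<ge> 2" using card_field_ge2[where 'a='a] field_card by simp
  have A: "M_disjunct TYPE('a) TYPE('n) i d k s (e2bar q i d k n s)"
    by (rule part1[OF field_card dim_n pos(1) assms(10) assms(11) assms(12) n_big s_bd(1)])
  have B: "i < d \<longrightarrow>
              filterlim (\<lambda>m. (e2bar q i d k m s + 1) / (e1bar q d k s + 1)) at_top at_top"
    using part2[OF q2 pos(1) _ assms(11) s_bd(1) s_bd(2)] by blast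
  show ?thesis using A B by blast
qed

end
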